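(* Let $p$ be a prime and let $a_p$ be a $p$-th Fourier coefficient. Then: (a) $(p+1+a_p)(p+1-a_p)$ is a unit in $\bar{\mathbb Z}$ if and only if $p=2$ and $a_2^2=8$; (b) if $p>3$, then neither $p+1+a_p$ nor $p+1-a_p$ is a unit in $\bar{\mathbb Z}$.
   Context: $\bar{\mathbb Z}$ is the ring of algebraic integers. For a prime $p$, an element $a_p\in\bar{\mathbb Q}$ is called a $p$-th Fourier coefficient if (i) $a_p\in\bar{\mathbb Z}$, (ii) $a_p$ is totally real (its minimal polynomial over $\mathbb Q$ splits over $\mathbb R$), and (iii) $|\sigma(a_p)|\le 2\sqrt p$ for every embedding $\sigma:\mathbb Q(a_p)\hookrightarrow\mathbb R$. *)

theory Defs
  imports Complex_Main "HOL-Computational_Algebra.Computational_Algebra"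
begin

definition alg_int :: "complex \<Rightarrow> bool" where
  "alg_int x \<longleftrightarrow> (\<exists>f :: int poly. lead_coeff f = 1 \<and> poly (map_poly of_int f) x = 0)"

definition alg_int_unit :: "complex \<Rightarrow> bool" where
  "alg_int_unit x \<longleftrightarrow> alg_int x \<and> x \<noteq> 0 \<and> alg_int (1 / x)"

text \<open>b is a (Galois) conjugate of a over Q: both are roots of the same
  irreducible rational polynomial, i.e. b is a root of the minimal polynomial of a.\<close>
definition conjugate :: "complex \<Rightarrow> complex \<Rightarrow> bool" where
  "conjugate a b \<longleftrightarrow> (\<exists>q :: rat poly. irreducible q \<and>
      poly (map_poly of_rat q) a = 0 \<and> poly (map_poly of_rat q) b = 0)"

text \<open>p-th Fourier coefficient: algebraic integer, totally real (all roots of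
  the minimal polynomial are real), and every real embedding sigma satisfies
  abs(sigma a) \<le> 2 sqrt p (the values sigma a are exactly the real conjugates).\<close>
definition fourier_coeff :: "nat \<Rightarrow> complex \<Rightarrow> bool" where
  "fourier_coeff p a \<longleftrightarrow> alg_int a \<and>
     (\<forall>b. conjugate a b \<longrightarrow> b \<in> \<real>) \<and>
     (\<forall>b. conjugate a b \<longrightarrow> b \<in> \<real> \<longrightarrow> cmod b \<le> 2 * sqrt (real p))"

end

theory Submission imports Defs "Berlekamp_Zassenhaus.Factor_Bound" begin

interpretation of_rat_poly_hom: map_poly_comm_semiring_hom "of_rat :: rat \<Rightarrow> complex" ..


lemma min_poly_exists:
  assumes "alg_int a"
  obtains m :: "int poly" where "lead_coeff m = 1" "poly (map_poly of_int m) a = 0"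
    "\<And>g::int poly. lead_coeff g = 1 \<Longrightarrow> poly (map_poly of_int g) a = 0 \<Longrightarrow> degree m \<le> degree g"
proof -
  define P where "P n \<longleftrightarrow> (\<exists>g::int poly. lead_coeff g = 1 \<and> poly (map_poly of_int g) a = 0 \<and> degree g = n)" for n
  from assms obtain f :: "int poly" where "lead_coeff f = 1" "poly (map_poly of_int f) a = 0"
    unfolding alg_int_def by auto
  hence "P (degree f)" unfolding P_def by auto
  hence "P (LEAST n. P n)" by (rule LeastI)
  then obtain m where m: "lead_coeff m = 1" "poly (map_poly of_int m) a = 0" "degree m = (LEAST n. P n)"
    unfolding P_def by auto
  show ?thesis
  proof (rule that[OF m(1,2)])
    fix g :: "int poly" assume "lead_coeff g = 1" "poly (map_poly of_int g) a = 0"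
    hence "P (degree g)" unfolding P_def by auto
    thus "degree m \<le> degree g" unfolding m(3) by (rule Least_le)
  qed
qed

lemma min_poly_irr:
  fixes m :: "int poly" and a :: complex
  assumes m1: "lead_coeff m = 1" and m2: "poly (map_poly of_int m) a = 0"
    and m3: "\<And>g::int poly. lead_coeff g = 1 \<Longrightarrow> poly (map_poly of_int g) a = 0 \<Longrightarrow> degree m \<le> degree g"
  shows "irreducible\<^sub>d m"
proof (rule irreducible\<^sub>dI)
  show "degree m > 0"
  proof (rule ccontr)
    assume "\<not> degree m > 0"
    hence "degree m = 0" by simp
    then obtain c where "m = [:c:]" by (rule degree_eq_zeroE)
    with m1 have "m = [:1:]" by simp
    with m2 show False by simp
  qed
next
  fix q r :: "int poly"
  assume dq: "degree q < degree m" and dr: "degree r < degree m" and mqr: "m = q * r"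
  have "lead_coeff q * lead_coeff r = 1" using m1 mqr by (simp add: lead_coeff_mult)
  hence "lead_coeff q = 1 \<and> lead_coeff r = 1 \<or> lead_coeff q = -1 \<and> lead_coeff r = -1"
    by (metis zmult_eq_1_iff)
  hence lq: "lead_coeff q * lead_coeff q = 1" and lr: "lead_coeff r * lead_coeff r = 1"
    by auto
  have "poly (map_poly of_int q) a * poly (map_poly of_int r) a = 0"
    using m2 mqr by (simp add: hom_distribs)
  hence "poly (map_poly of_int q) a = 0 \<or> poly (map_poly of_int r) a = 0" by simp
  thus False
  proof
    assume h: "poly (map_poly of_int q) a = 0"
    have "lead_coeff (Polynomial.smult (lead_coeff q) q) = 1" using lq by (cases "q = 0") auto
    moreover have "poly (map_poly of_int (Polynomial.smult (lead_coeff q) q)) a = 0" using h by (simp add: hom_distribs)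
    ultimately have "degree m \<le> degree (Polynomial.smult (lead_coeff q) q)" by (rule m3)
    thus False using dq lq by (cases "q = 0") auto
  next
    assume h: "poly (map_poly of_int r) a = 0"
    have "lead_coeff (Polynomial.smult (lead_coeff r) r) = 1" using lr by (cases "r = 0") auto
    moreover have "poly (map_poly of_int (Polynomial.smult (lead_coeff r) r)) a = 0" using h by (simp add: hom_distribs)
    ultimately have "degree m \<le> degree (Polynomial.smult (lead_coeff r) r)" by (rule m3)
    thus False using dr lr by (cases "r = 0") auto
  qed
qed

lemma of_rat_of_int_poly: "map_poly (of_rat :: rat \<Rightarrow> complex) (map_poly rat_of_int f) = map_poly of_int f"
  by (subst map_poly_map_poly) (auto simp: o_def)

lemma min_poly_small:
  fixes m r :: "int poly" and a :: complex
  assumes irr: "irreducible\<^sub>d m" and m2: "poly (map_poly of_int m) a = 0"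
    and r0: "r \<noteq> 0" and r2: "poly (map_poly of_int r) a = 0"
  shows "degree m \<le> degree r"
proof -
  define mq where "mq = map_poly rat_of_int m"
  define rq where "rq = map_poly rat_of_int r"
  have irrq: "irreducible mq" using irreducible\<^sub>d_int_rat[OF irr] unfolding mq_def by simp
  have rq0: "rq \<noteq> 0" using r0 unfolding rq_def by simp
  define g where "g = gcd mq rq"
  have bez: "fst (bezout_coefficients mq rq) * mq + snd (bezout_coefficients mq rq) * rq = g"
    unfolding g_def by (rule bezout_coefficients_fst_snd)
  have mqa: "poly (map_poly of_rat mq) a = 0" using m2 unfolding mq_def of_rat_of_int_poly .
  have rqa: "poly (map_poly of_rat rq) a = 0" using r2 unfolding rq_def of_rat_of_int_poly .
  have ga: "poly (map_poly (of_rat :: rat \<Rightarrow> complex) g) a = 0"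
    unfolding bez[symmetric] using mqa rqa by (simp add: of_rat_poly_hom.hom_mult of_rat_poly_hom.hom_add)
  have "\<not> is_unit g"
  proof
    assume "is_unit g"
    then obtain c where gc: "g = [:c:]" "is_unit c" unfolding is_unit_poly_iff by blast
    hence "c \<noteq> 0" by auto
    with ga gc show False by simp
  qed
  moreover have "g dvd mq" unfolding g_def by simp
  then obtain k where gk: "mq = g * k" by (auto elim: dvdE)
  have "is_unit g \<or> is_unit k" using irreducible_multD[OF irrq[unfolded gk]] by blast
  ultimately have ku: "is_unit k" by blast
  have "mq dvd g * k" using gk by simp
  hence "mq dvd g" using dvd_mult_unit_iff[OF ku] by blast
  also have "g dvd rq" unfolding g_def by simp
  finally have "degree mq \<le> degree rq" using rq0 by (rule dvd_imp_degree_le)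
  thus ?thesis unfolding mq_def rq_def by simp
qed


lemma min_poly_dvd:
  fixes m s :: "int poly" and a :: complex
  assumes m1: "lead_coeff m = 1" and irr: "irreducible\<^sub>d m" and m2: "poly (map_poly of_int m) a = 0"
    and s2: "poly (map_poly of_int s) a = 0"
  shows "\<exists>q. s = m * q"
proof -
  obtain q r where pd: "pseudo_divmod s m = (q, r)" by (cases "pseudo_divmod s m")
  have m0: "m \<noteq> 0" using m1 by auto
  have "Polynomial.smult (lead_coeff m ^ (Suc (degree s) - degree m)) s = m * q + r"
    by (rule pseudo_divmod(1)[OF m0 pd])
  hence sqr: "s = m * q + r" using m1 by simp
  have rd: "r = 0 \<or> degree r < degree m" by (rule pseudo_divmod(2)[OF m0 pd])
  have "map_poly of_int r = (map_poly of_int s - map_poly of_int m * map_poly of_int q :: complex poly)"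
    unfolding sqr by (simp add: hom_distribs)
  hence ra: "poly (map_poly of_int r) a = 0" using m2 s2 by simp
  have "r = 0"
  proof (rule ccontr)
    assume "r \<noteq> 0"
    from min_poly_small[OF irr m2 this ra] rd \<open>r \<noteq> 0\<close> show False by auto
  qed
  with sqr show ?thesis by auto
qed

lemma reflect_of_int: "map_poly (of_int :: int \<Rightarrow> complex) (reflect_poly h) = reflect_poly (map_poly of_int h)"
  by (rule poly_eqI) (simp add: coeff_reflect_poly coeff_map_poly)

lemma unit_poly:
  assumes "alg_int_unit y"
  shows "\<exists>r::int poly. Polynomial.coeff r 0 = 1 \<and> poly (map_poly of_int r) y = 0"
proof -
  from assms have y0: "y \<noteq> 0" and "alg_int (1 / y)" unfolding alg_int_unit_def by auto
  then obtain h :: "int poly" where h1: "lead_coeff h = 1" and h2: "poly (map_poly of_int h) (1 / y) = 0"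
    unfolding alg_int_def by auto
  have "poly (map_poly of_int (reflect_poly h)) y = 0"
    unfolding reflect_of_int using y0 h2 by (simp add: poly_reflect_poly_nz divide_inverse)
  moreover have "Polynomial.coeff (reflect_poly h) 0 = 1" using h1 by simp
  ultimately show ?thesis by blast
qed

lemma unit_norm:
  fixes m P :: "int poly" and a :: complex and t0 :: int
  assumes m1: "lead_coeff m = 1" and irr: "irreducible\<^sub>d m" and m2: "poly (map_poly of_int m) a = 0"
    and u: "alg_int_unit (poly (map_poly of_int P) a)" and P0: "poly P t0 = 0"
  shows "\<bar>poly m t0\<bar> = 1"
proof -
  from unit_poly[OF u] obtain r :: "int poly" where r1: "Polynomial.coeff r 0 = 1"
    and r2: "poly (map_poly of_int r) (poly (map_poly of_int P) a) = 0" by blast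
  define s where "s = pcompose r P"
  have s2: "poly (map_poly of_int s) a = 0" unfolding s_def
    using r2 by (simp add: of_int_hom.map_poly_pcompose poly_pcompose)
  have s1: "poly s t0 = 1" unfolding s_def using r1 P0 by (simp add: poly_pcompose poly_0_coeff_0)
  from min_poly_dvd[OF m1 irr m2 s2] obtain q where "s = m * q" by blast
  with s1 have "poly m t0 * poly q t0 = 1" by simp
  hence "poly m t0 = 1 \<or> poly m t0 = -1" by (metis zmult_eq_1_iff)
  thus ?thesis by auto
qed

lemma prod_list_gt1: "xs \<noteq> [] \<Longrightarrow> \<forall>x\<in>set xs. (x::real) > 1 \<Longrightarrow> prod_list xs > 1"
proof (induct xs)
  case Nil thus ?case by simp
next
  case (Cons x xs)
  show ?case
  proof (cases "xs = []")
    case True thus ?thesis using Cons by simp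
  next
    case False
    hence "prod_list xs > 1" using Cons by simp
    moreover have "x > 1" using Cons by simp
    ultimately show ?thesis by (simp add: less_1_mult)
  qed
qed

lemma prod_list_ge1: "\<forall>x\<in>set xs. (x::real) \<ge> 1 \<Longrightarrow> prod_list xs \<ge> 1"
proof (induct xs)
  case Nil thus ?case by simp
next
  case (Cons x xs)
  hence "prod_list xs \<ge> 1" "x \<ge> 1" by auto
  thus ?case using mult_mono[of 1 x 1 "prod_list xs"] by simp
qed

lemma prod_list_ge_elem: "\<forall>x\<in>set xs. (x::real) \<ge> 1 \<Longrightarrow> y \<in> set xs \<Longrightarrow> y \<le> prod_list xs"
proof (induct xs)
  case Nil thus ?case by simp
next
  case (Cons x xs)
  hence p1: "prod_list xs \<ge> 1" and x1: "x \<ge> 1" using prod_list_ge1 by auto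
  show ?case
  proof (cases "y = x")
    case True
    thus ?thesis using p1 x1 mult_left_mono[of 1 "prod_list xs" x] by simp
  next
    case False
    hence "y \<le> prod_list xs" using Cons by auto
    moreover have "prod_list xs \<le> x * prod_list xs" using x1 p1 mult_right_mono[of 1 x "prod_list xs"] by simp
    ultimately have "y \<le> x * prod_list xs" by linarith
    thus ?thesis by simp
  qed
qed

lemma prod_list_map_mult: "prod_list (map f xs) * prod_list (map g xs) = prod_list (map (\<lambda>x. f x * g x) xs)"
  for f g :: "'b \<Rightarrow> 'a :: comm_monoid_mult"
  by (induct xs) (simp_all add: ac_simps)


theorem lemma2p3:
  fixes p :: nat and a :: complex
  assumes "prime p" and "fourier_coeff p a"
  shows "(alg_int_unit ((of_nat p + 1 + a) * (of_nat p + 1 - a)) \<longleftrightarrow> (p = 2 \<and> a ^ 2 = 8))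
     \<and> (p > 3 \<longrightarrow> \<not> alg_int_unit (of_nat p + 1 + a) \<and> \<not> alg_int_unit (of_nat p + 1 - a))"
proof -
  from assms(2) have aint: "alg_int a" and creal: "\<And>b. Defs.conjugate a b \<Longrightarrow> b \<in> \<real>"
    and cbound: "\<And>b. Defs.conjugate a b \<Longrightarrow> cmod b \<le> 2 * sqrt (real p)"
    unfolding fourier_coeff_def by auto
  have p2: "p \<ge> 2" using assms(1) by (rule prime_ge_2_nat)
  obtain m :: "int poly" where m1: "lead_coeff m = 1" and m2: "poly (map_poly of_int m) a = 0"
    and m3: "\<And>g::int poly. lead_coeff g = 1 \<Longrightarrow> poly (map_poly of_int g) a = 0 \<Longrightarrow> degree m \<le> degree g"
    using min_poly_exists[OF aint] by blast
  have irr: "irreducible\<^sub>d m" by (rule min_poly_irr[OF m1 m2 m3])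
  have conj: "Defs.conjugate a b" if "poly (map_poly of_int m) b = 0" for b
  proof -
    have "irreducible (map_poly rat_of_int m)" using irreducible\<^sub>d_int_rat[OF irr] by simp
    thus ?thesis unfolding conjugate_def using m2 that of_rat_of_int_poly[of m] by metis
  qed
  define mc where "mc = (map_poly of_int m :: complex poly)"
  have lmc: "lead_coeff mc = 1" unfolding mc_def using m1 by simp
  obtain as where as1: "Polynomial.smult (lead_coeff mc) (\<Prod>b\<leftarrow>as. [:-b,1:]) = mc"
    using fundamental_theorem_algebra_factorized[of mc] by blast
  have pmc: "poly mc z = (\<Prod>b\<leftarrow>as. z - b)" for z
  proof -
    have "poly mc z = poly (\<Prod>b\<leftarrow>as. [:-b,1:]) z" using as1 lmc by (metis smult_1_left)
    also have "\<dots> = (\<Prod>b\<leftarrow>as. z - b)" by (induct as) (auto simp: algebra_simps)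
    finally show ?thesis .
  qed
  have roots: "b \<in> \<real> \<and> cmod b \<le> 2 * sqrt (real p)" if "b \<in> set as" for b
  proof -
    have "poly mc b = 0" unfolding pmc using that by (auto simp: prod_list_zero_iff)
    hence "Defs.conjugate a b" using conj unfolding mc_def by blast
    thus ?thesis using creal cbound by blast
  qed
  have ain: "a \<in> set as" using m2 unfolding mc_def[symmetric] pmc by (auto simp: prod_list_zero_iff)
  have asne: "as \<noteq> []" using ain by auto
  have normm: "real_of_int \<bar>poly m t\<bar> = (\<Prod>b\<leftarrow>as. cmod (of_int t - b))" for t :: int
  proof -
    have "(of_int (poly m t) :: complex) = poly mc (of_int t)" unfolding mc_def by simp
    hence "cmod (of_int (poly m t)) = (\<Prod>b\<leftarrow>as. cmod (of_int t - b))" by (simp add: pmc prod_cmod)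
    thus ?thesis by simp
  qed
  have lowb: "cmod (of_int t - b) \<ge> real_of_int \<bar>t\<bar> - 2 * sqrt (real p)" if "b \<in> set as" for t b
  proof -
    have "cmod (of_int t) - cmod b \<le> cmod (of_int t - b)" by (rule norm_triangle_ineq2)
    thus ?thesis using roots[OF that] by simp
  qed
  have partb: "\<not> alg_int_unit (of_nat p + 1 + a) \<and> \<not> alg_int_unit (of_nat p + 1 - a)" if p3: "p > 3"
  proof -
    have "\<not> prime (2 * 2 :: nat)"
    proof
      assume "prime (2 * 2 :: nat)"
      from prime_product[OF this] show False by simp
    qed
    hence "p \<noteq> 4" using assms(1) by auto
    hence p5: "real p > 2 ^ 2" using p3 by simp
    hence sp: "2 < sqrt (real p)" by (rule real_less_rsqrt)
    have "sqrt (real p) * sqrt (real p) = real p" using real_sqrt_mult_self[of "real p"] by simp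
    moreover have "2 * sqrt (real p) < sqrt (real p) * sqrt (real p)"
      using sp by (intro mult_strict_right_mono) linarith+
    ultimately have gap: "real p + 1 - 2 * sqrt (real p) > 1" by linarith
    have nu: "\<bar>poly m t\<bar> \<noteq> 1" if t: "\<bar>t\<bar> = int p + 1" for t
    proof
      assume "\<bar>poly m t\<bar> = 1"
      hence "(\<Prod>b\<leftarrow>as. cmod (of_int t - b)) = 1" using normm[of t] by simp
      moreover have "(\<Prod>b\<leftarrow>as. cmod (of_int t - b)) > 1"
      proof (rule prod_list_gt1)
        show "map (\<lambda>b. cmod (of_int t - b)) as \<noteq> []" using asne by simp
        show "\<forall>x\<in>set (map (\<lambda>b. cmod (of_int t - b)) as). 1 < x"
        proof
          fix x assume "x \<in> set (map (\<lambda>b. cmod (of_int t - b)) as)"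
          then obtain b where b: "b \<in> set as" "x = cmod (of_int t - b)" by auto
          have "x \<ge> real_of_int \<bar>t\<bar> - 2 * sqrt (real p)" using lowb[OF b(1)] b(2) by simp
          thus "1 < x" using gap t by simp
        qed
      qed
      ultimately show False by simp
    qed
    have u1: "\<not> alg_int_unit (of_nat p + 1 + a)"
    proof
      assume u: "alg_int_unit (of_nat p + 1 + a)"
      have eq: "of_nat p + 1 + a = poly (map_poly of_int [:int p + 1, 1:]) a" by (simp add: map_poly_pCons)
      have u': "alg_int_unit (poly (map_poly of_int [:int p + 1, 1:]) a)" using u unfolding eq .
      have P0: "poly [:int p + 1, 1:] (- (int p + 1)) = 0" by simp
      have "\<bar>poly m (- (int p + 1))\<bar> = 1" by (rule unit_norm[OF m1 irr m2 u' P0])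
      moreover have "\<bar>- (int p + 1)\<bar> = int p + 1" by simp
      ultimately show False using nu by blast
    qed
    have u2: "\<not> alg_int_unit (of_nat p + 1 - a)"
    proof
      assume u: "alg_int_unit (of_nat p + 1 - a)"
      have eq: "of_nat p + 1 - a = poly (map_poly of_int [:int p + 1, -1:]) a" by (simp add: map_poly_pCons)
      have u': "alg_int_unit (poly (map_poly of_int [:int p + 1, -1:]) a)" using u unfolding eq .
      have P0: "poly [:int p + 1, -1:] (int p + 1) = 0" by simp
      have "\<bar>poly m (int p + 1)\<bar> = 1" by (rule unit_norm[OF m1 irr m2 u' P0])
      moreover have "\<bar>int p + 1\<bar> = int p + 1" by simp
      ultimately show False using nu by blast
    qed
    from u1 u2 show ?thesis by blast
  qed
  define t1 where "t1 = int p + 1"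
  define F where "F b = cmod (of_int t1 - b) * cmod (of_int (- t1) - b)" for b
  have sqb: "cmod b ^ 2 \<le> 4 * real p" if "b \<in> set as" for b
  proof -
    have "cmod b ^ 2 \<le> (2 * sqrt (real p)) ^ 2" using roots[OF that] by (intro power_mono) auto
    thus ?thesis by (simp add: power_mult_distrib)
  qed
  have Flow: "F b \<ge> real_of_int t1 ^ 2 - cmod b ^ 2" for b
  proof -
    have e: "(of_int t1 - b) * (of_int (- t1) - b) = - ((of_int t1) ^ 2 - b ^ 2)"
      by (simp add: algebra_simps power2_eq_square)
    have "F b = cmod ((of_int t1) ^ 2 - b ^ 2)" unfolding F_def norm_mult[symmetric] e
      by (simp only: norm_minus_cancel)
    moreover have "cmod ((of_int t1) ^ 2) - cmod (b ^ 2) \<le> cmod ((of_int t1) ^ 2 - b ^ 2)"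
      by (rule norm_triangle_ineq2)
    ultimately show ?thesis by (simp add: norm_power)
  qed
  have t1sq: "real_of_int t1 ^ 2 - 4 * real p \<ge> 1"
  proof -
    have "real p * (real p - 2) \<ge> 0" using p2 by simp
    thus ?thesis unfolding t1_def by (simp add: power2_eq_square algebra_simps)
  qed
  have F1: "F b \<ge> 1" if "b \<in> set as" for b
    using Flow[of b] sqb[OF that] t1sq by linarith
  have parta: "alg_int_unit ((of_nat p + 1 + a) * (of_nat p + 1 - a)) \<longleftrightarrow> (p = 2 \<and> a ^ 2 = 8)"
  proof
    assume u: "alg_int_unit ((of_nat p + 1 + a) * (of_nat p + 1 - a))"
    have eq: "(of_nat p + 1 + a) * (of_nat p + 1 - a) = poly (map_poly of_int [:t1 ^ 2, 0, -1:]) a"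
      unfolding t1_def by (simp add: map_poly_pCons algebra_simps power2_eq_square)
    have u': "alg_int_unit (poly (map_poly of_int [:t1 ^ 2, 0, -1:]) a)" using u unfolding eq .
    have P1: "poly [:t1 ^ 2, 0, -1:] t1 = 0" by (simp add: power2_eq_square)
    have P2: "poly [:t1 ^ 2, 0, -1:] (- t1) = 0" by (simp add: power2_eq_square)
    have n1: "\<bar>poly m t1\<bar> = 1" by (rule unit_norm[OF m1 irr m2 u' P1])
    have n2: "\<bar>poly m (- t1)\<bar> = 1" by (rule unit_norm[OF m1 irr m2 u' P2])
    have "1 = real_of_int \<bar>poly m t1\<bar> * real_of_int \<bar>poly m (- t1)\<bar>" using n1 n2 by simp
    also have "\<dots> = (\<Prod>b\<leftarrow>as. F b)" unfolding normm F_def by (rule prod_list_map_mult)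
    finally have P1: "(\<Prod>b\<leftarrow>as. F b) = 1" by simp
    have "F a \<le> (\<Prod>b\<leftarrow>as. F b)"
      by (rule prod_list_ge_elem) (use F1 ain in auto)
    hence Fa: "F a \<le> 1" using P1 by simp
    hence "real_of_int t1 ^ 2 - 4 * real p \<le> 1" using Flow[of a] sqb[OF ain] by linarith
    hence "real p * (real p - 2) \<le> 0" unfolding t1_def by (simp add: power2_eq_square algebra_simps)
    hence "real p \<le> 2" using p2 by (simp add: mult_le_0_iff)
    hence pe: "p = 2" using p2 by simp
    from roots[OF ain] obtain x where ax: "a = of_real x" by (auto elim: Reals_cases)
    have "cmod a ^ 2 \<le> 8" using sqb[OF ain] pe by simp
    hence x8: "x ^ 2 \<le> 8" using ax by simp
    have "real_of_int t1 ^ 2 - cmod a ^ 2 \<le> 1" using Fa Flow[of a] by linarith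
    hence "9 - x ^ 2 \<le> 1" using ax pe unfolding t1_def by simp
    with x8 have "x ^ 2 = 8" by simp
    hence "a ^ 2 = of_real 8" using ax by (metis of_real_power)
    thus "p = 2 \<and> a ^ 2 = 8" using pe by simp
  next
    assume h: "p = 2 \<and> a ^ 2 = 8"
    have "(of_nat p + 1 + a) * (of_nat p + 1 - a) = 9 - a ^ 2" using h
      by (simp add: algebra_simps power2_eq_square)
    also have "\<dots> = 1" using h by simp
    finally have e: "(of_nat p + 1 + a) * (of_nat p + 1 - a) = 1" .
    have "alg_int 1" unfolding alg_int_def by (rule exI[of _ "[:-1, 1:]"]) simp
    thus "alg_int_unit ((of_nat p + 1 + a) * (of_nat p + 1 - a))" unfolding e alg_int_unit_def by simp
  qed
  show ?thesis using parta partb by blast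
qed

end
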